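(* Let $a<b<c$ be elements of $\mathcal{C}_n$. An element $\alpha$ of the triangle $\triangle^{(n)}\{a,b,c\}$ is an idempotent lying in the interior of the triangle if and only if $\alpha$ is a right identity of $\triangle^{(n)}\{a,b,c\}$.
   Context: $\mathcal{C}_n=\{0,1,\dots,n-1\}$ with its usual order; $\widehat{\mathcal{E}}_{\mathcal{C}_n}$ is the set of all order-preserving maps $\mathcal{C}_n\to\mathcal{C}_n$ (not required to fix $0$), a semiring with $(\alpha+\beta)(x)=\max(\alpha(x),\beta(x))$ and $(\alpha\cdot\beta)(x)=\beta(\alpha(x))$. The triangle $\triangle^{(n)}\{a,b,c\}$ is the set of all $\alpha\in\widehat{\mathcal{E}}_{\mathcal{C}_n}$ with image in $\{a,b,c\}$; its interior is the set of its elements whose image is exactly $\{a,b,c\}$ (i.e. not lying in any of the strings of maps with image in $\{a,b\}$, $\{a,c\}$ or $\{b,c\}$). Idempotent means $\alpha\cdot\alpha=\alpha$; a right identity is $e$ with $\beta\cdot e=\beta$ for all $\beta$ in the triangle. *)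

theory Defs
  imports Main
begin

text \<open>Maps C_n -> C_n are represented as functions nat => nat, extensional:
  they take the value 0 outside {0..<n}, so that HOL equality coincides with
  equality of maps on C_n.\<close>

definition chainC :: "nat \<Rightarrow> nat set" where
  "chainC n = {..<n}"

definition Ehat :: "nat \<Rightarrow> (nat \<Rightarrow> nat) set" where
  "Ehat n = {f. (\<forall>x<n. f x < n) \<and> (\<forall>x y. x \<le> y \<and> y < n \<longrightarrow> f x \<le> f y)
              \<and> (\<forall>x. n \<le> x \<longrightarrow> f x = 0)}"

definition emult :: "nat \<Rightarrow> (nat \<Rightarrow> nat) \<Rightarrow> (nat \<Rightarrow> nat) \<Rightarrow> (nat \<Rightarrow> nat)" where
  "emult n \<alpha> \<beta> = (\<lambda>x. if x < n then \<beta> (\<alpha> x) else 0)"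

definition triangle :: "nat \<Rightarrow> nat \<Rightarrow> nat \<Rightarrow> nat \<Rightarrow> (nat \<Rightarrow> nat) set" where
  "triangle n a b c = {\<alpha> \<in> Ehat n. \<alpha> ` chainC n \<subseteq> {a, b, c}}"

definition triangle_interior :: "nat \<Rightarrow> nat \<Rightarrow> nat \<Rightarrow> nat \<Rightarrow> (nat \<Rightarrow> nat) set" where
  "triangle_interior n a b c = {\<alpha> \<in> triangle n a b c. \<alpha> ` chainC n = {a, b, c}}"

definition idempotent_E :: "nat \<Rightarrow> (nat \<Rightarrow> nat) \<Rightarrow> bool" where
  "idempotent_E n \<alpha> \<longleftrightarrow> emult n \<alpha> \<alpha> = \<alpha>"

definition right_identity :: "nat \<Rightarrow> (nat \<Rightarrow> nat) set \<Rightarrow> (nat \<Rightarrow> nat) \<Rightarrow> bool" where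
  "right_identity n S e \<longleftrightarrow> (\<forall>\<beta>\<in>S. emult n \<beta> e = \<beta>)"

end

theory Submission
  imports Defs
begin

theorem proposition32:
  fixes n a b c :: nat and \<alpha> :: "nat \<Rightarrow> nat"
  assumes "a < b" and "b < c" and "c < n"
    and "\<alpha> \<in> triangle n a b c"
  shows "(idempotent_E n \<alpha> \<and> \<alpha> \<in> triangle_interior n a b c)
         \<longleftrightarrow> right_identity n (triangle n a b c) \<alpha>"
proof
  assume H: "idempotent_E n \<alpha> \<and> \<alpha> \<in> triangle_interior n a b c"
  have fx: "\<alpha> y = y" if "y \<in> {a,b,c}" for y
  proof -
    from H that have "y \<in> \<alpha> ` chainC n" unfolding triangle_interior_def by auto
    then obtain x where x: "x < n" "y = \<alpha> x" unfolding chainC_def by auto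
    from H have "emult n \<alpha> \<alpha> x = \<alpha> x" unfolding idempotent_E_def by simp
    with x show ?thesis unfolding emult_def by simp
  qed
  show "right_identity n (triangle n a b c) \<alpha>"
    unfolding right_identity_def
  proof
    fix \<beta> assume b: "\<beta> \<in> triangle n a b c"
    show "emult n \<beta> \<alpha> = \<beta>"
    proof
      fix x
      show "emult n \<beta> \<alpha> x = \<beta> x"
      proof (cases "x < n")
        case True
        with b have "\<beta> x \<in> {a,b,c}" unfolding triangle_def chainC_def by auto
        with True fx show ?thesis unfolding emult_def by simp
      next
        case False
        with b show ?thesis unfolding emult_def triangle_def Ehat_def by auto
      qed
    qed
  qed
next
  assume R: "right_identity n (triangle n a b c) \<alpha>"
  have idem: "idempotent_E n \<alpha>"
    using R assms(4) unfolding right_identity_def idempotent_E_def by blast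
  have fx: "y \<in> \<alpha> ` chainC n" if y: "y \<in> {a,b,c}" for y
  proof -
    define \<beta> where "\<beta> = (\<lambda>x::nat. if x < n then y else 0)"
    have yn: "y < n" using y assms by auto
    have "\<beta> \<in> triangle n a b c"
      unfolding triangle_def Ehat_def chainC_def \<beta>_def using y yn by auto
    with R have "emult n \<beta> \<alpha> = \<beta>" unfolding right_identity_def by blast
    hence "emult n \<beta> \<alpha> 0 = \<beta> 0" by simp
    hence "\<alpha> y = y" using yn unfolding emult_def \<beta>_def by simp
    thus ?thesis using yn unfolding chainC_def by (metis image_eqI lessThan_iff)
  qed
  have "\<alpha> ` chainC n = {a,b,c}"
    using assms(4) fx unfolding triangle_def by blast
  with idem assms(4) show "idempotent_E n \<alpha> \<and> \<alpha> \<in> triangle_interior n a b c"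
    unfolding triangle_interior_def by blast
qed

end
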